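(* Let $n\ge1$ and let $\mathfrak h_{2n+2}$ be the real Lie algebra with basis $X^1,\dots,X^{2n+2}$ whose only nonzero brackets are $[X^i,X^{n+1}]=X^{n+1+i}$ for $1\le i\le n$, with dual basis $\alpha_1,\dots,\alpha_{2n+2}$, so that $d\alpha_i=0$ for $1\le i\le n+1$ and $i=2n+2$, and $d\alpha_{n+1+i}=\alpha_{n+1}\wedge\alpha_i$ for $1\le i\le n$. Let $g=\sum_i\alpha_i\otimes\alpha_i$ (so $X^1,\dots,X^{2n+2}$ is orthonormal) and let $J$ be an endomorphism of $\mathfrak h_{2n+2}$ with $J^2=-\mathrm{Id}$ and $g(JX,JY)=g(X,Y)$. Write $JX^i=\sum_{j}a^i_jX^j$ and let $\mathcal J$ be the $(2n+2)\times(2n+2)$ matrix whose $(i,j)$ entry is $a^i_j$ (it is orthogonal and antisymmetric). Let $F=\frac12\sum_{i,j}a^i_j\,\alpha_i\wedge\alpha_j$ be the Kähler form, viewed as a left-invariant 2-form on the corresponding simply connected Lie group. Then $dF=0$ if and only if $$\mathcal J=\begin{pmatrix} O & A\\ -{}^tA & O\end{pmatrix}$$ with $O$ the $(n+1)\times(n+1)$ zero matrix and $A$ an orthogonal $(n+1)\times(n+1)$ matrix whose upper-left $n\times n$ block $B$ (entries $a^i_{n+1+j}$, $1\le i,j\le n$) is symmetric.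
   Context: Here $d$ is the exterior derivative of left-invariant forms, determined by $d\alpha(X,Y)=-\alpha([X,Y])$ for left-invariant 1-forms, equivalently by the stated structure equations. *)

theory Defs
  imports Complex_Main
begin

text \<open>Elements of the Lie algebra h_{2n+2} are coordinate functions
  X :: nat \<Rightarrow> real w.r.t. the basis X^1,...,X^{2n+2}, i.e. X k is the
  coefficient of X^k; coordinates outside {1..2n+2} are required to vanish.\<close>

definition dimh :: "nat \<Rightarrow> nat" where
  "dimh n = 2 * n + 2"

definition hvec :: "nat \<Rightarrow> (nat \<Rightarrow> real) \<Rightarrow> bool" where
  "hvec n X \<longleftrightarrow> (\<forall>k. k \<notin> {1..dimh n} \<longrightarrow> X k = 0)"

text \<open>Structure constants: [X^i, X^j] = sum_k c i j k X^k; the only nonzero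
  brackets are [X^i, X^{n+1}] = X^{n+1+i} (1 \<le> i \<le> n) and their negatives.\<close>
definition hconst :: "nat \<Rightarrow> nat \<Rightarrow> nat \<Rightarrow> nat \<Rightarrow> real" where
  "hconst n i j k =
     (if 1 \<le> i \<and> i \<le> n \<and> j = n + 1 \<and> k = n + 1 + i then 1
      else if 1 \<le> j \<and> j \<le> n \<and> i = n + 1 \<and> k = n + 1 + j then -1
      else 0)"

definition hbracket :: "nat \<Rightarrow> (nat \<Rightarrow> real) \<Rightarrow> (nat \<Rightarrow> real) \<Rightarrow> (nat \<Rightarrow> real)" where
  "hbracket n X Y = (\<lambda>k. if k \<in> {1..dimh n} then
      (\<Sum>i\<in>{1..dimh n}. \<Sum>j\<in>{1..dimh n}. X i * Y j * hconst n i j k) else 0)"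

definition hmetric :: "nat \<Rightarrow> (nat \<Rightarrow> real) \<Rightarrow> (nat \<Rightarrow> real) \<Rightarrow> real" where
  "hmetric n X Y = (\<Sum>i\<in>{1..dimh n}. X i * Y i)"

text \<open>The endomorphism J determined by J X^i = sum_j a^i_j X^j, with a i j = a^i_j.\<close>
definition Jop :: "nat \<Rightarrow> (nat \<Rightarrow> nat \<Rightarrow> real) \<Rightarrow> (nat \<Rightarrow> real) \<Rightarrow> (nat \<Rightarrow> real)" where
  "Jop n a X = (\<lambda>j. if j \<in> {1..dimh n} then (\<Sum>i\<in>{1..dimh n}. X i * a i j) else 0)"

text \<open>Wedge of 1-forms: (alpha \<and> beta)(X,Y) = alpha(X) beta(Y) - alpha(Y) beta(X).
  The Kaehler form F = 1/2 sum_{i,j} a^i_j alpha_i \<and> alpha_j as a bilinear map.\<close>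
definition kahler_form :: "nat \<Rightarrow> (nat \<Rightarrow> nat \<Rightarrow> real) \<Rightarrow> (nat \<Rightarrow> real) \<Rightarrow> (nat \<Rightarrow> real) \<Rightarrow> real" where
  "kahler_form n a X Y =
     (1/2) * (\<Sum>i\<in>{1..dimh n}. \<Sum>j\<in>{1..dimh n}. a i j * (X i * Y j - X j * Y i))"

text \<open>Exterior derivative of a left-invariant 2-form (Chevalley-Eilenberg formula,
  the convention extending d alpha(X,Y) = - alpha([X,Y])).\<close>
definition d2 :: "nat \<Rightarrow> ((nat \<Rightarrow> real) \<Rightarrow> (nat \<Rightarrow> real) \<Rightarrow> real)
                 \<Rightarrow> (nat \<Rightarrow> real) \<Rightarrow> (nat \<Rightarrow> real) \<Rightarrow> (nat \<Rightarrow> real) \<Rightarrow> real" where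
  "d2 n \<omega> X Y Z = - \<omega> (hbracket n X Y) Z + \<omega> (hbracket n X Z) Y - \<omega> (hbracket n Y Z) X"

end

theory Submission
  imports Defs
begin

lemma dsum:
  assumes "finite A" "finite B"
  shows "(\<Sum>i\<in>A. \<Sum>j\<in>B. f i j * (if i = c \<and> j = d \<and> P then 1 else 0)) =
         (if c \<in> A \<and> d \<in> B \<and> P then f c d else (0::real))"
proof -
  have e: "\<And>i j. f i j * (if i = c \<and> j = d \<and> P then 1 else 0) = (if i = c then (if j = d then (if P then f c d else 0) else 0) else 0)"
    by auto
  have "(\<Sum>i\<in>A. \<Sum>j\<in>B. f i j * (if i = c \<and> j = d \<and> P then 1 else 0)) = (\<Sum>i\<in>A. if i = c then (\<Sum>j\<in>B. (if j = d then (if P then f c d else 0) else 0)) else 0)"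
    unfolding e by (intro sum.cong) auto
  also have "\<dots> = (if c \<in> A then (if d \<in> B then (if P then f c d else 0) else 0) else 0)"
    using assms by (simp only: sum.delta)
  finally show ?thesis by simp
qed
lemma kf:
  assumes as: "\<forall>i\<in>{1..dimh n}. \<forall>j\<in>{1..dimh n}. a j i = - a i j"
  shows "kahler_form n a X Y = (\<Sum>i\<in>{1..dimh n}. \<Sum>j\<in>{1..dimh n}. a i j * X i * Y j)"
proof -
  let ?I = "{1..dimh n}"
  let ?S1 = "(\<Sum>i\<in>?I. \<Sum>j\<in>?I. a i j * X i * Y j)"
  have t: "\<And>i j. a i j * (X i * Y j - X j * Y i) = a i j * X i * Y j - a i j * (X j * Y i)"
    by (simp add: algebra_simps)
  have "(\<Sum>i\<in>?I. \<Sum>j\<in>?I. a i j * (X j * Y i)) = (\<Sum>j\<in>?I. \<Sum>i\<in>?I. a i j * (X j * Y i))"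
    by (rule sum.swap)
  also have "\<dots> = (\<Sum>j\<in>?I. \<Sum>i\<in>?I. - (a j i * X j * Y i))"
  proof (rule sum.cong[OF refl], rule sum.cong[OF refl])
    fix j i assume "j \<in> ?I" "i \<in> ?I"
    then have "a i j = - a j i" using as by blast
    then show "a i j * (X j * Y i) = - (a j i * X j * Y i)" by simp
  qed
  also have "\<dots> = - ?S1" by (simp only: sum_negf)
  finally have e: "(\<Sum>i\<in>?I. \<Sum>j\<in>?I. a i j * (X j * Y i)) = - ?S1" .
  have "kahler_form n a X Y = (1/2) * (?S1 - (\<Sum>i\<in>?I. \<Sum>j\<in>?I. a i j * (X j * Y i)))"
    unfolding kahler_form_def t by (simp only: sum_subtractf)
  then show ?thesis unfolding e by simp
qed

lemma br:
  "hbracket n X Y = (\<lambda>k. if n+2 \<le> k \<and> k \<le> 2*n+1 then X (k-(n+1)) * Y (n+1) - X (n+1) * Y (k-(n+1)) else 0)"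
proof
  fix k
  let ?I = "{1..dimh n}"
  let ?P = "n+2 \<le> k \<and> k \<le> 2*n+1"
  show "hbracket n X Y k = (if ?P then X (k-(n+1)) * Y (n+1) - X (n+1) * Y (k-(n+1)) else 0)"
  proof (cases "k \<in> ?I")
    case False
    then have nP: "\<not> ?P" by (auto simp: dimh_def)
    show ?thesis unfolding hbracket_def if_not_P[OF False] if_not_P[OF nP] ..
  next
    case True
    have h: "hconst n i j k = (if i = k-(n+1) \<and> j = n+1 \<and> ?P then 1 else 0) - (if i = n+1 \<and> j = k-(n+1) \<and> ?P then 1 else 0)" for i j
    proof -
      have A: "(1 \<le> i \<and> i \<le> n \<and> j = n + 1 \<and> k = n + 1 + i) \<longleftrightarrow> (i = k-(n+1) \<and> j = n+1 \<and> ?P)" by auto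
      have B: "(1 \<le> j \<and> j \<le> n \<and> i = n + 1 \<and> k = n + 1 + j) \<longleftrightarrow> (i = n+1 \<and> j = k-(n+1) \<and> ?P)" by auto
      have C: "\<not> ((i = k-(n+1) \<and> j = n+1 \<and> ?P) \<and> (i = n+1 \<and> j = k-(n+1) \<and> ?P))" by auto
      show ?thesis
      proof (cases "i = k-(n+1) \<and> j = n+1 \<and> ?P")
        case T: True
        with C have "\<not> (i = n+1 \<and> j = k-(n+1) \<and> ?P)" by blast
        with T show ?thesis unfolding hconst_def A B by (simp only: if_True if_False; simp)
      next
        case F: False
        then show ?thesis unfolding hconst_def A B by (simp only: if_True if_False; simp)
      qed
    qed
    have "hbracket n X Y k = (\<Sum>i\<in>?I. \<Sum>j\<in>?I. X i * Y j * hconst n i j k)"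
      using True unfolding hbracket_def by (simp only: if_True)
    also have "\<dots> = (\<Sum>i\<in>?I. \<Sum>j\<in>?I. X i * Y j * (if i = k-(n+1) \<and> j = n+1 \<and> ?P then 1 else 0))
       - (\<Sum>i\<in>?I. \<Sum>j\<in>?I. X i * Y j * (if i = n+1 \<and> j = k-(n+1) \<and> ?P then 1 else 0))"
    proof -
      have "\<And>i j. X i * Y j * hconst n i j k = X i * Y j * (if i = k-(n+1) \<and> j = n+1 \<and> ?P then 1 else 0) - X i * Y j * (if i = n+1 \<and> j = k-(n+1) \<and> ?P then 1 else 0)"
        unfolding h by (rule right_diff_distrib)
      then show ?thesis by (simp only: sum_subtractf)
    qed
    also have "\<dots> = (if ?P then X (k-(n+1)) * Y (n+1) - X (n+1) * Y (k-(n+1)) else 0)"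
    proof (cases ?P)
      case P: True
      have m1: "k-(n+1) \<in> ?I \<and> n+1 \<in> ?I \<and> ?P" and m2: "n+1 \<in> ?I \<and> k-(n+1) \<in> ?I \<and> ?P"
        using P by (auto simp: dimh_def)
      show ?thesis unfolding dsum[OF finite_atLeastAtMost finite_atLeastAtMost, of "\<lambda>i j. X i * Y j" "k-(n+1)" "n+1" ?P]
        dsum[OF finite_atLeastAtMost finite_atLeastAtMost, of "\<lambda>i j. X i * Y j" "n+1" "k-(n+1)" ?P] if_P[OF m1] if_P[OF m2] if_P[OF P] ..
    next
      case P: False
      have m1: "\<not> (k-(n+1) \<in> ?I \<and> n+1 \<in> ?I \<and> ?P)" and m2: "\<not> (n+1 \<in> ?I \<and> k-(n+1) \<in> ?I \<and> ?P)"
        using P by auto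
      show ?thesis unfolding dsum[OF finite_atLeastAtMost finite_atLeastAtMost, of "\<lambda>i j. X i * Y j" "k-(n+1)" "n+1" ?P]
        dsum[OF finite_atLeastAtMost finite_atLeastAtMost, of "\<lambda>i j. X i * Y j" "n+1" "k-(n+1)" ?P] if_not_P[OF m1] if_not_P[OF m2] if_not_P[OF P] by simp
    qed
    finally show ?thesis .
  qed
qed


lemma split2:
  fixes g :: "nat \<Rightarrow> real"
  shows "(\<Sum>l\<in>{1..2*m}. g l) = (\<Sum>l\<in>{1..m}. g l) + (\<Sum>j\<in>{1..m}. g (m+j))"
proof -
  have 1: "(\<Sum>l\<in>{1..m+m}. g l) = (\<Sum>l\<in>{1..m}. g l) + (\<Sum>l\<in>{m+1..m+m}. g l)"
    by (rule sum.ub_add_nat) simp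
  have 2: "{m+1..m+m} = {1+m..m+m}" by simp
  have 3: "(\<Sum>l\<in>{1+m..m+m}. g l) = (\<Sum>j\<in>{1..m}. g (j+m))" by (rule sum.shift_bounds_cl_nat_ivl)
  have 4: "(\<lambda>j. g (j+m)) = (\<lambda>j. g (m+j))" by (simp add: add.commute)
  have 5: "2*m = m+m" by simp
  show ?thesis unfolding 5 1 2 3 4 ..
qed

definition F1 :: "nat \<Rightarrow> (nat \<Rightarrow> nat \<Rightarrow> real) \<Rightarrow> (nat \<Rightarrow> real) \<Rightarrow> (nat \<Rightarrow> real) \<Rightarrow> (nat \<Rightarrow> real) \<Rightarrow> real" where
  "F1 n a X Y Z = (\<Sum>t\<in>{1..n}. \<Sum>j\<in>{1..dimh n}. a (n+1+t) j * (X t * Y (n+1) - X (n+1) * Y t) * Z j)"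

lemma kfbr:
  assumes as: "\<forall>i\<in>{1..dimh n}. \<forall>j\<in>{1..dimh n}. a j i = - a i j"
  shows "kahler_form n a (hbracket n X Y) Z = F1 n a X Y Z"
proof -
  let ?I = "{1..dimh n}"
  let ?P = "\<lambda>i. n+2 \<le> i \<and> i \<le> 2*n+1"
  let ?h = "\<lambda>i. X (i-(n+1)) * Y (n+1) - X (n+1) * Y (i-(n+1))"
  let ?g = "\<lambda>i. \<Sum>j\<in>?I. a i j * ?h i * Z j"
  have "kahler_form n a (hbracket n X Y) Z = (\<Sum>i\<in>?I. \<Sum>j\<in>?I. a i j * (if ?P i then ?h i else 0) * Z j)"
    unfolding kf[OF as] br ..
  also have "\<dots> = (\<Sum>i\<in>?I. if ?P i then ?g i else 0)"
  proof (rule sum.cong[OF refl])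
    fix i show "(\<Sum>j\<in>?I. a i j * (if ?P i then ?h i else 0) * Z j) = (if ?P i then ?g i else 0)"
    proof (cases "?P i")
      case True show ?thesis unfolding if_P[OF True] by (rule refl)
    next
      case False then show ?thesis unfolding if_not_P[OF False] by simp
    qed
  qed
  also have "\<dots> = (\<Sum>i\<in>{i\<in>?I. ?P i}. ?g i)"
    by (rule sum.inter_filter[symmetric]) simp
  also have "{i\<in>?I. ?P i} = {1+(n+1)..n+(n+1)}" by (auto simp: dimh_def)
  also have "(\<Sum>i\<in>{1+(n+1)..n+(n+1)}. ?g i) = (\<Sum>t\<in>{1..n}. ?g (t+(n+1)))"
    by (rule sum.shift_bounds_cl_nat_ivl)
  also have "\<dots> = F1 n a X Y Z" unfolding F1_def
  proof (rule sum.cong[OF refl])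
    fix t
    have e1: "t + (n+1) = n+1+t" by simp
    have e2: "n+1+t - (n+1) = t" by simp
    show "?g (t+(n+1)) = (\<Sum>j\<in>?I. a (n+1+t) j * (X t * Y (n+1) - X (n+1) * Y t) * Z j)"
      unfolding e1 e2 ..
  qed
  finally show ?thesis .
qed

lemma d2F1:
  assumes as: "\<forall>i\<in>{1..dimh n}. \<forall>j\<in>{1..dimh n}. a j i = - a i j"
  shows "d2 n (kahler_form n a) X Y Z = - F1 n a X Y Z + F1 n a X Z Y - F1 n a Y Z X"
  unfolding d2_def kfbr[OF as] ..

definition ev :: "nat \<Rightarrow> nat \<Rightarrow> real" where "ev p = (\<lambda>k. if k = p then 1 else 0)"

lemma F1_basis:
  "F1 n a (ev p) (ev q) (ev r) =
     (if q = n+1 \<and> p \<in> {1..n} \<and> r \<in> {1..dimh n} then a (n+1+p) r else 0)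
   - (if p = n+1 \<and> q \<in> {1..n} \<and> r \<in> {1..dimh n} then a (n+1+q) r else 0)"
proof -
  let ?I = "{1..dimh n}"
  have e: "\<And>t j. a (n+1+t) j * (ev p t * ev q (n+1) - ev p (n+1) * ev q t) * ev r j =
      (a (n+1+t) j * ev q (n+1)) * (if t = p \<and> j = r \<and> True then 1 else 0)
    - (a (n+1+t) j * ev p (n+1)) * (if t = q \<and> j = r \<and> True then 1 else 0)"
    unfolding ev_def by simp
  have "F1 n a (ev p) (ev q) (ev r) =
     (\<Sum>t\<in>{1..n}. \<Sum>j\<in>?I. (a (n+1+t) j * ev q (n+1)) * (if t = p \<and> j = r \<and> True then 1 else 0))
   - (\<Sum>t\<in>{1..n}. \<Sum>j\<in>?I. (a (n+1+t) j * ev p (n+1)) * (if t = q \<and> j = r \<and> True then 1 else 0))"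
    unfolding F1_def e by (simp only: sum_subtractf)
  also have "\<dots> = (if p \<in> {1..n} \<and> r \<in> ?I \<and> True then a (n+1+p) r * ev q (n+1) else 0)
     - (if q \<in> {1..n} \<and> r \<in> ?I \<and> True then a (n+1+q) r * ev p (n+1) else 0)"
    unfolding dsum[OF finite_atLeastAtMost finite_atLeastAtMost] ..
  finally show ?thesis unfolding ev_def by auto
qed
lemma hvec_ev: "p \<in> {1..dimh n} \<Longrightarrow> hvec n (ev p)"
  unfolding hvec_def ev_def by auto

lemma Jev:
  assumes "p \<in> {1..dimh n}"
  shows "Jop n a (ev p) = (\<lambda>j. if j \<in> {1..dimh n} then a p j else 0)"
proof
  fix j
  have e: "\<And>i. ev p i * a i j = (if i = p then a p j else 0)" unfolding ev_def by simp
  show "Jop n a (ev p) j = (if j \<in> {1..dimh n} then a p j else 0)"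
    unfolding Jop_def e using assms by simp
qed

lemma Jrow:
  "Jop n a (\<lambda>j. if j \<in> {1..dimh n} then a p j else 0) =
   (\<lambda>j. if j \<in> {1..dimh n} then (\<Sum>k\<in>{1..dimh n}. a p k * a k j) else 0)"
proof
  fix j
  have "(\<Sum>i\<in>{1..dimh n}. (if i \<in> {1..dimh n} then a p i else 0) * a i j) = (\<Sum>k\<in>{1..dimh n}. a p k * a k j)"
    by (rule sum.cong[OF refl]) simp
  then show "Jop n a (\<lambda>j. if j \<in> {1..dimh n} then a p j else 0) j =
   (if j \<in> {1..dimh n} then (\<Sum>k\<in>{1..dimh n}. a p k * a k j) else 0)"
    unfolding Jop_def by simp
qed

lemma hm_ev:
  assumes "p \<in> {1..dimh n}" "q \<in> {1..dimh n}"
  shows "hmetric n (ev p) (ev q) = (if p = q then 1 else 0)"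
proof -
  have e: "\<And>i. ev p i * ev q i = (if i = p then (if p = q then 1 else 0) else 0)" unfolding ev_def by simp
  show ?thesis unfolding hmetric_def e using assms by simp
qed

lemma hm_rows:
  "hmetric n (\<lambda>j. if j \<in> {1..dimh n} then a p j else 0) (\<lambda>j. if j \<in> {1..dimh n} then a q j else 0)
    = (\<Sum>k\<in>{1..dimh n}. a p k * a q k)"
  unfolding hmetric_def by (rule sum.cong[OF refl]) simp

lemma jmat:
  assumes Jsq: "\<forall>X. hvec n X \<longrightarrow> Jop n a (Jop n a X) = (\<lambda>k. - X k)"
    and Jorth: "\<forall>X Y. hvec n X \<longrightarrow> hvec n Y \<longrightarrow>
                   hmetric n (Jop n a X) (Jop n a Y) = hmetric n X Y"
  shows S: "\<forall>p\<in>{1..dimh n}. \<forall>j\<in>{1..dimh n}. (\<Sum>k\<in>{1..dimh n}. a p k * a k j) = (if p = j then -1 else 0)"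
    and O: "\<forall>p\<in>{1..dimh n}. \<forall>q\<in>{1..dimh n}. (\<Sum>k\<in>{1..dimh n}. a p k * a q k) = (if p = q then 1 else 0)"
proof -
  let ?I = "{1..dimh n}"
  show "\<forall>p\<in>?I. \<forall>j\<in>?I. (\<Sum>k\<in>?I. a p k * a k j) = (if p = j then -1 else 0)"
  proof (intro ballI)
    fix p j assume p: "p \<in> ?I" and j: "j \<in> ?I"
    have "Jop n a (Jop n a (ev p)) = (\<lambda>k. - ev p k)" using Jsq hvec_ev[OF p] by blast
    then have "Jop n a (Jop n a (ev p)) j = - ev p j" by simp
    then show "(\<Sum>k\<in>?I. a p k * a k j) = (if p = j then -1 else 0)"
      unfolding Jev[OF p] Jrow using j by (auto simp: ev_def)
  qed
  show "\<forall>p\<in>?I. \<forall>q\<in>?I. (\<Sum>k\<in>?I. a p k * a q k) = (if p = q then 1 else 0)"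
  proof (intro ballI)
    fix p q assume p: "p \<in> ?I" and q: "q \<in> ?I"
    have "hmetric n (Jop n a (ev p)) (Jop n a (ev q)) = hmetric n (ev p) (ev q)"
      using Jorth hvec_ev[OF p] hvec_ev[OF q] by blast
    then show "(\<Sum>k\<in>?I. a p k * a q k) = (if p = q then 1 else 0)"
      unfolding Jev[OF p] Jev[OF q] hm_rows hm_ev[OF p q] .
  qed
qed

lemma antisym:
  fixes a :: "nat \<Rightarrow> nat \<Rightarrow> real"
  assumes S: "\<forall>p\<in>{1..dimh n}. \<forall>j\<in>{1..dimh n}. (\<Sum>k\<in>{1..dimh n}. a p k * a k j) = (if p = j then -1 else 0)"
    and O: "\<forall>p\<in>{1..dimh n}. \<forall>q\<in>{1..dimh n}. (\<Sum>k\<in>{1..dimh n}. a p k * a q k) = (if p = q then 1 else 0)"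
  shows "\<forall>i\<in>{1..dimh n}. \<forall>j\<in>{1..dimh n}. a j i = - a i j"
proof (intro ballI)
  let ?I = "{1..dimh n}"
  fix i j assume i: "i \<in> ?I" and j: "j \<in> ?I"
  have "(\<Sum>k\<in>?I. (\<Sum>l\<in>?I. a i l * a l k) * a j k) = (\<Sum>k\<in>?I. (if i = k then -1 else 0) * a j k)"
    by (rule sum.cong[OF refl]) (use S i in simp)
  also have "\<dots> = (\<Sum>k\<in>?I. if k = i then - a j i else 0)" by (rule sum.cong[OF refl]) auto
  also have "\<dots> = - a j i" using i by simp
  finally have 1: "(\<Sum>k\<in>?I. (\<Sum>l\<in>?I. a i l * a l k) * a j k) = - a j i" .
  have "(\<Sum>k\<in>?I. (\<Sum>l\<in>?I. a i l * a l k) * a j k) = (\<Sum>k\<in>?I. \<Sum>l\<in>?I. a i l * (a l k * a j k))"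
    by (simp only: sum_distrib_right mult.assoc)
  also have "\<dots> = (\<Sum>l\<in>?I. \<Sum>k\<in>?I. a i l * (a l k * a j k))" by (rule sum.swap)
  also have "\<dots> = (\<Sum>l\<in>?I. a i l * (\<Sum>k\<in>?I. a l k * a j k))" by (simp only: sum_distrib_left)
  also have "\<dots> = (\<Sum>l\<in>?I. a i l * (if l = j then 1 else 0))"
    by (rule sum.cong[OF refl]) (use O j in simp)
  also have "\<dots> = (\<Sum>l\<in>?I. if l = j then a i j else 0)" by (rule sum.cong[OF refl]) auto
  also have "\<dots> = a i j" using j by simp
  finally show "a j i = - a i j" using 1 by simp
qed

lemma d2_basis:
  assumes as: "\<forall>i\<in>{1..dimh n}. \<forall>j\<in>{1..dimh n}. a j i = - a i j"
    and i: "i \<in> {1..n}" and r: "r \<in> {1..dimh n}" and rm: "r \<noteq> n+1"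
  shows "d2 n (kahler_form n a) (ev i) (ev (n+1)) (ev r) = - a (n+1+i) r + (if r \<in> {1..n} then a (n+1+r) i else 0)"
proof -
  have iI: "i \<in> {1..dimh n}" and im: "i \<noteq> n+1" using i by (auto simp: dimh_def)
  have f1: "F1 n a (ev i) (ev (n+1)) (ev r) = a (n+1+i) r"
    unfolding F1_basis using i r im by simp
  have f2: "F1 n a (ev i) (ev r) (ev (n+1)) = 0"
    unfolding F1_basis using rm im by simp
  have f3: "F1 n a (ev (n+1)) (ev r) (ev i) = - (if r \<in> {1..n} then a (n+1+r) i else 0)"
    unfolding F1_basis using rm iI by simp
  show ?thesis unfolding d2F1[OF as] f1 f2 f3 by simp
qed

lemma sym_zero:
  fixes f :: "nat \<Rightarrow> nat \<Rightarrow> real"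
  assumes "\<forall>t\<in>A. \<forall>j\<in>A. f t j = - f j t"
  shows "(\<Sum>t\<in>A. \<Sum>j\<in>A. f t j) = 0"
proof -
  have "(\<Sum>t\<in>A. \<Sum>j\<in>A. f t j) = (\<Sum>t\<in>A. \<Sum>j\<in>A. - f j t)"
  proof (rule sum.cong[OF refl], rule sum.cong[OF refl])
    fix t j assume "t \<in> A" "j \<in> A"
    then show "f t j = - f j t" using assms by blast
  qed
  also have "\<dots> = - (\<Sum>t\<in>A. \<Sum>j\<in>A. f j t)" by (simp only: sum_negf)
  also have "(\<Sum>t\<in>A. \<Sum>j\<in>A. f j t) = (\<Sum>j\<in>A. \<Sum>t\<in>A. f j t)" by (rule sum.swap)
  finally show ?thesis by simp
qed

lemma bwd:
  fixes a :: "nat \<Rightarrow> nat \<Rightarrow> real"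
  assumes AS: "\<forall>i\<in>{1..dimh n}. \<forall>j\<in>{1..dimh n}. a j i = - a i j"
    and LR: "\<forall>i\<in>{1..n+1}. \<forall>j\<in>{1..n+1}. a (n+1+i) (n+1+j) = 0"
    and T3: "\<forall>i\<in>{1..n+1}. \<forall>j\<in>{1..n+1}. a (n+1+j) i = - a i (n+1+j)"
    and B6: "\<forall>i\<in>{1..n}. \<forall>j\<in>{1..n}. a i (n+1+j) = a j (n+1+i)"
  shows "d2 n (kahler_form n a) X Y Z = 0"
proof -
  define Q where "Q t j = -(X t * Y (n+1) - X (n+1) * Y t) * Z j + (X t * Z (n+1) - X (n+1) * Z t) * Y j - (Y t * Z (n+1) - Y (n+1) * Z t) * X j" for t j
  let ?I = "{1..dimh n}"
  let ?M = "{1..n+1}"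
  have pt: "\<And>t j. a (n+1+t) j * Q t j = - (a (n+1+t) j * (X t * Y (n+1) - X (n+1) * Y t) * Z j)
      + a (n+1+t) j * (X t * Z (n+1) - X (n+1) * Z t) * Y j - a (n+1+t) j * (Y t * Z (n+1) - Y (n+1) * Z t) * X j"
    unfolding Q_def by (simp add: algebra_simps)
  have 1: "d2 n (kahler_form n a) X Y Z = (\<Sum>t\<in>{1..n}. \<Sum>j\<in>?I. a (n+1+t) j * Q t j)"
    unfolding d2F1[OF AS] F1_def pt by (simp only: sum.distrib sum_subtractf sum_negf)
  have 2: "(\<Sum>j\<in>?I. a (n+1+t) j * Q t j) = (\<Sum>j\<in>{1..n}. a (n+1+t) j * Q t j)" if t: "t \<in> {1..n}" for t
  proof -
    have dI: "?I = {1..2*(n+1)}" by (simp add: dimh_def)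
    have z: "(\<Sum>j\<in>?M. a (n+1+t) (n+1+j) * Q t (n+1+j)) = 0"
    proof (rule sum.neutral, rule ballI)
      fix j assume "j \<in> ?M"
      then have "a (n+1+t) (n+1+j) = 0" using LR t by auto
      then show "a (n+1+t) (n+1+j) * Q t (n+1+j) = 0" by simp
    qed
    have q: "Q t (n+1) = 0" unfolding Q_def by (simp add: algebra_simps)
    have "(\<Sum>j\<in>?I. a (n+1+t) j * Q t j) = (\<Sum>j\<in>?M. a (n+1+t) j * Q t j)"
      unfolding dI split2 z by simp
    also have "\<dots> = (\<Sum>j\<in>{1..n}. a (n+1+t) j * Q t j) + a (n+1+t) (n+1) * Q t (n+1)"
      by simp
    finally show ?thesis unfolding q by simp
  qed
  have 3: "(\<Sum>t\<in>{1..n}. \<Sum>j\<in>{1..n}. a (n+1+t) j * Q t j) = 0"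
  proof (rule sym_zero, intro ballI)
    fix t j assume t: "t \<in> {1..n}" and j: "j \<in> {1..n}"
    have tM: "t \<in> ?M" and jM: "j \<in> ?M" using t j by auto
    have "a (n+1+t) j = - a j (n+1+t)" using T3 jM tM by blast
    also have "a j (n+1+t) = a t (n+1+j)" using B6 t j by metis
    also have "- a t (n+1+j) = a (n+1+j) t" using T3 jM tM by simp
    finally have e: "a (n+1+t) j = a (n+1+j) t" .
    have "Q t j = - Q j t" unfolding Q_def by (simp add: algebra_simps)
    then show "a (n+1+t) j * Q t j = - (a (n+1+j) t * Q j t)" unfolding e by simp
  qed
  show ?thesis unfolding 1 using 2 3 by simp
qed

lemma fwd:
  fixes a :: "nat \<Rightarrow> nat \<Rightarrow> real"
  assumes AS: "\<forall>i\<in>{1..dimh n}. \<forall>j\<in>{1..dimh n}. a j i = - a i j"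
    and O: "\<forall>p\<in>{1..dimh n}. \<forall>q\<in>{1..dimh n}. (\<Sum>k\<in>{1..dimh n}. a p k * a q k) = (if p = q then 1 else 0)"
    and H: "\<forall>X Y Z. hvec n X \<longrightarrow> hvec n Y \<longrightarrow> hvec n Z \<longrightarrow> d2 n (kahler_form n a) X Y Z = 0"
  shows "(\<forall>i\<in>{1..n+1}. \<forall>j\<in>{1..n+1}. a i j = 0)
        \<and> (\<forall>i\<in>{1..n+1}. \<forall>j\<in>{1..n+1}. a (n+1+i) (n+1+j) = 0)
        \<and> (\<forall>i\<in>{1..n+1}. \<forall>j\<in>{1..n+1}. a (n+1+j) i = - a i (n+1+j))
        \<and> (\<forall>i\<in>{1..n+1}. \<forall>k\<in>{1..n+1}.
              (\<Sum>j\<in>{1..n+1}. a i (n+1+j) * a k (n+1+j)) = (if i = k then 1 else 0))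
        \<and> (\<forall>i\<in>{1..n+1}. \<forall>k\<in>{1..n+1}.
              (\<Sum>j\<in>{1..n+1}. a j (n+1+i) * a j (n+1+k)) = (if i = k then 1 else 0))
        \<and> (\<forall>i\<in>{1..n}. \<forall>j\<in>{1..n}. a i (n+1+j) = a j (n+1+i))"
proof -
  let ?I = "{1..dimh n}"
  let ?M = "{1..n+1}"
  have dI: "?I = {1..2*(n+1)}" by (simp add: dimh_def)
  have MI: "\<And>i. i \<in> ?M \<Longrightarrow> i \<in> ?I \<and> n+1+i \<in> ?I" by (auto simp: dimh_def)
  have NI: "\<And>i. i \<in> {1..n} \<Longrightarrow> i \<in> ?I" by (auto simp: dimh_def)
  have mI: "n+1 \<in> ?I" by (auto simp: dimh_def)
  have dF: "d2 n (kahler_form n a) (ev i) (ev (n+1)) (ev r) = 0" if "i \<in> ?I" "r \<in> ?I" for i r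
    using H hvec_ev[OF that(1)] hvec_ev[OF mI] hvec_ev[OF that(2)] by blast
  have C1: "\<forall>i\<in>{1..n}. \<forall>j\<in>?M. a (n+1+i) (n+1+j) = 0"
  proof (intro ballI)
    fix i j assume i: "i \<in> {1..n}" and j: "j \<in> ?M"
    have r: "n+1+j \<in> ?I" using MI[OF j] by simp
    have rm: "n+1+j \<noteq> n+1" using j by auto
    have "d2 n (kahler_form n a) (ev i) (ev (n+1)) (ev (n+1+j)) = 0" using dF NI[OF i] r by blast
    then show "a (n+1+i) (n+1+j) = 0" unfolding d2_basis[OF AS i r rm] by simp
  qed
  have C2: "\<forall>i\<in>{1..n}. \<forall>r\<in>{1..n}. a (n+1+r) i = a (n+1+i) r"
  proof (intro ballI)
    fix i r assume i: "i \<in> {1..n}" and r: "r \<in> {1..n}"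
    have rm: "r \<noteq> n+1" using r by auto
    have "d2 n (kahler_form n a) (ev i) (ev (n+1)) (ev r) = 0" using dF NI[OF i] NI[OF r] by blast
    then show "a (n+1+r) i = a (n+1+i) r" unfolding d2_basis[OF AS i NI[OF r] rm] using r by simp
  qed
  have LR: "\<forall>i\<in>?M. \<forall>j\<in>?M. a (n+1+i) (n+1+j) = 0"
  proof (intro ballI)
    fix i j assume i: "i \<in> ?M" and j: "j \<in> ?M"
    show "a (n+1+i) (n+1+j) = 0"
    proof (cases "i \<le> n")
      case True then show ?thesis using C1 i j by auto
    next
      case False
      then have ii: "i = n+1" using i by auto
      show ?thesis
      proof (cases "j \<le> n")
        case True
        then have jn: "j \<in> {1..n}" using j by auto
        have "n+1 \<in> ?M" by auto
        then have "a (n+1+j) (n+1+(n+1)) = 0" using C1 jn by blast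
        then have "a (n+1+j) (n+1+i) = 0" unfolding ii .
        moreover have "a (n+1+i) (n+1+j) = - a (n+1+j) (n+1+i)" using AS MI[OF i] MI[OF j] by blast
        ultimately show ?thesis by simp
      next
        case False
        then have jj: "j = i" using j ii by auto
        have "a (n+1+i) (n+1+i) = - a (n+1+i) (n+1+i)" using AS MI[OF i] by blast
        then show ?thesis unfolding jj by simp
      qed
    qed
  qed
  have T3: "\<forall>i\<in>?M. \<forall>j\<in>?M. a (n+1+j) i = - a i (n+1+j)"
    using AS MI by blast
  have col: "\<forall>i\<in>?M. \<forall>k\<in>?M. (\<Sum>j\<in>?M. a j (n+1+i) * a j (n+1+k)) = (if i = k then 1 else 0)"
  proof (intro ballI)
    fix i k assume i: "i \<in> ?M" and k: "k \<in> ?M"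
    have z: "(\<Sum>j\<in>?M. a (n+1+i) (n+1+j) * a (n+1+k) (n+1+j)) = 0"
      by (rule sum.neutral) (use LR i in simp)
    have c: "(\<Sum>l\<in>?M. a (n+1+i) l * a (n+1+k) l) = (\<Sum>j\<in>?M. a j (n+1+i) * a j (n+1+k))"
    proof (rule sum.cong[OF refl])
      fix l assume l: "l \<in> ?M"
      have "a (n+1+i) l = - a l (n+1+i)" "a (n+1+k) l = - a l (n+1+k)" using T3 i k l by auto
      then show "a (n+1+i) l * a (n+1+k) l = a l (n+1+i) * a l (n+1+k)" by simp
    qed
    have "(\<Sum>l\<in>?I. a (n+1+i) l * a (n+1+k) l) = (if n+1+i = n+1+k then 1 else 0)"
      using O MI[OF i] MI[OF k] by blast
    then show "(\<Sum>j\<in>?M. a j (n+1+i) * a j (n+1+k)) = (if i = k then 1 else 0)"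
      unfolding dI split2 z c by simp
  qed
  have rowsplit: "(\<Sum>l\<in>?M. a i l * a k l) + (\<Sum>j\<in>?M. a i (n+1+j) * a k (n+1+j)) = (if i = k then 1 else 0)"
    if i: "i \<in> ?M" and k: "k \<in> ?M" for i k
  proof -
    have "(\<Sum>l\<in>?I. a i l * a k l) = (if i = k then 1 else 0)"
      using O MI[OF i] MI[OF k] by blast
    then show ?thesis unfolding dI split2 .
  qed
  have sq: "(\<Sum>i\<in>?M. \<Sum>l\<in>?M. a i l * a i l) = 0"
  proof -
    have "(\<Sum>i\<in>?M. \<Sum>l\<in>?M. a i l * a i l) = (\<Sum>i\<in>?M. 1 - (\<Sum>j\<in>?M. a i (n+1+j) * a i (n+1+j)))"
    proof (rule sum.cong[OF refl])
      fix i assume i: "i \<in> ?M"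
      from rowsplit[OF i i] show "(\<Sum>l\<in>?M. a i l * a i l) = 1 - (\<Sum>j\<in>?M. a i (n+1+j) * a i (n+1+j))"
        by simp
    qed
    also have "\<dots> = (\<Sum>i\<in>?M. 1) - (\<Sum>i\<in>?M. \<Sum>j\<in>?M. a i (n+1+j) * a i (n+1+j))"
      by (simp only: sum_subtractf)
    also have "(\<Sum>i\<in>?M. \<Sum>j\<in>?M. a i (n+1+j) * a i (n+1+j)) = (\<Sum>j\<in>?M. \<Sum>i\<in>?M. a i (n+1+j) * a i (n+1+j))"
      by (rule sum.swap)
    also have "\<dots> = (\<Sum>j\<in>?M. (1::real))"
      by (rule sum.cong[OF refl]) (use col in simp)
    finally show ?thesis by simp
  qed
  have UL: "\<forall>i\<in>?M. \<forall>l\<in>?M. a i l = 0"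
  proof -
    have nn: "\<And>i. 0 \<le> (\<Sum>l\<in>?M. a i l * a i l)" by (rule sum_nonneg) simp
    have "(\<Sum>i\<in>?M. \<Sum>l\<in>?M. a i l * a i l) = 0 \<longleftrightarrow> (\<forall>i\<in>?M. (\<Sum>l\<in>?M. a i l * a i l) = 0)"
      by (rule sum_nonneg_eq_0_iff) (rule finite_atLeastAtMost, rule nn)
    then have "\<forall>i\<in>?M. (\<Sum>l\<in>?M. a i l * a i l) = 0" using sq by blast
    moreover have "\<And>i. (\<Sum>l\<in>?M. a i l * a i l) = 0 \<longleftrightarrow> (\<forall>l\<in>?M. a i l * a i l = 0)"
      by (rule sum_nonneg_eq_0_iff) simp_all
    ultimately have "\<forall>i\<in>?M. \<forall>l\<in>?M. a i l * a i l = 0" by blast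
    then show ?thesis by simp
  qed
  have rows: "\<forall>i\<in>?M. \<forall>k\<in>?M. (\<Sum>j\<in>?M. a i (n+1+j) * a k (n+1+j)) = (if i = k then 1 else 0)"
  proof (intro ballI)
    fix i k assume i: "i \<in> ?M" and k: "k \<in> ?M"
    have "(\<Sum>l\<in>?M. a i l * a k l) = 0" by (rule sum.neutral) (use UL i in simp)
    then show "(\<Sum>j\<in>?M. a i (n+1+j) * a k (n+1+j)) = (if i = k then 1 else 0)"
      using rowsplit[OF i k] by simp
  qed
  have B6: "\<forall>i\<in>{1..n}. \<forall>j\<in>{1..n}. a i (n+1+j) = a j (n+1+i)"
  proof (intro ballI)
    fix i j assume i: "i \<in> {1..n}" and j: "j \<in> {1..n}"
    have iM: "i \<in> ?M" and jM: "j \<in> ?M" using i j by auto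
    have "a (n+1+j) i = a (n+1+i) j" using C2 i j by blast
    moreover have "a (n+1+j) i = - a i (n+1+j)" "a (n+1+i) j = - a j (n+1+i)" using T3 iM jM by auto
    ultimately show "a i (n+1+j) = a j (n+1+i)" by simp
  qed
  show ?thesis using UL LR T3 rows col B6 by blast
qed

theorem lemma3p2:
  fixes n :: nat and a :: "nat \<Rightarrow> nat \<Rightarrow> real"
  assumes n1: "n \<ge> 1"
    and Jsq: "\<forall>X. hvec n X \<longrightarrow> Jop n a (Jop n a X) = (\<lambda>k. - X k)"
    and Jorth: "\<forall>X Y. hvec n X \<longrightarrow> hvec n Y \<longrightarrow>
                   hmetric n (Jop n a X) (Jop n a Y) = hmetric n X Y"
  shows "(\<forall>X Y Z. hvec n X \<longrightarrow> hvec n Y \<longrightarrow> hvec n Z \<longrightarrow>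
             d2 n (kahler_form n a) X Y Z = 0)
     \<longleftrightarrow>
         ((\<forall>i\<in>{1..n+1}. \<forall>j\<in>{1..n+1}. a i j = 0)
        \<and> (\<forall>i\<in>{1..n+1}. \<forall>j\<in>{1..n+1}. a (n+1+i) (n+1+j) = 0)
        \<and> (\<forall>i\<in>{1..n+1}. \<forall>j\<in>{1..n+1}. a (n+1+j) i = - a i (n+1+j))
        \<and> (\<forall>i\<in>{1..n+1}. \<forall>k\<in>{1..n+1}.
              (\<Sum>j\<in>{1..n+1}. a i (n+1+j) * a k (n+1+j)) = (if i = k then 1 else 0))
        \<and> (\<forall>i\<in>{1..n+1}. \<forall>k\<in>{1..n+1}.
              (\<Sum>j\<in>{1..n+1}. a j (n+1+i) * a j (n+1+k)) = (if i = k then 1 else 0))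
        \<and> (\<forall>i\<in>{1..n}. \<forall>j\<in>{1..n}. a i (n+1+j) = a j (n+1+i)))"
proof -
  note S = jmat(1)[OF Jsq Jorth] and O = jmat(2)[OF Jsq Jorth]
  note AS = antisym[OF S O]
  show ?thesis
  proof
    assume H: "\<forall>X Y Z. hvec n X \<longrightarrow> hvec n Y \<longrightarrow> hvec n Z \<longrightarrow> d2 n (kahler_form n a) X Y Z = 0"
    show "(\<forall>i\<in>{1..n+1}. \<forall>j\<in>{1..n+1}. a i j = 0)
        \<and> (\<forall>i\<in>{1..n+1}. \<forall>j\<in>{1..n+1}. a (n+1+i) (n+1+j) = 0)
        \<and> (\<forall>i\<in>{1..n+1}. \<forall>j\<in>{1..n+1}. a (n+1+j) i = - a i (n+1+j))
        \<and> (\<forall>i\<in>{1..n+1}. \<forall>k\<in>{1..n+1}.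
              (\<Sum>j\<in>{1..n+1}. a i (n+1+j) * a k (n+1+j)) = (if i = k then 1 else 0))
        \<and> (\<forall>i\<in>{1..n+1}. \<forall>k\<in>{1..n+1}.
              (\<Sum>j\<in>{1..n+1}. a j (n+1+i) * a j (n+1+k)) = (if i = k then 1 else 0))
        \<and> (\<forall>i\<in>{1..n}. \<forall>j\<in>{1..n}. a i (n+1+j) = a j (n+1+i))"
      by (rule fwd[OF AS O H])
  next
    assume C: "(\<forall>i\<in>{1..n+1}. \<forall>j\<in>{1..n+1}. a i j = 0)
        \<and> (\<forall>i\<in>{1..n+1}. \<forall>j\<in>{1..n+1}. a (n+1+i) (n+1+j) = 0)
        \<and> (\<forall>i\<in>{1..n+1}. \<forall>j\<in>{1..n+1}. a (n+1+j) i = - a i (n+1+j))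
        \<and> (\<forall>i\<in>{1..n+1}. \<forall>k\<in>{1..n+1}.
              (\<Sum>j\<in>{1..n+1}. a i (n+1+j) * a k (n+1+j)) = (if i = k then 1 else 0))
        \<and> (\<forall>i\<in>{1..n+1}. \<forall>k\<in>{1..n+1}.
              (\<Sum>j\<in>{1..n+1}. a j (n+1+i) * a j (n+1+k)) = (if i = k then 1 else 0))
        \<and> (\<forall>i\<in>{1..n}. \<forall>j\<in>{1..n}. a i (n+1+j) = a j (n+1+i))"
    then have LR: "\<forall>i\<in>{1..n+1}. \<forall>j\<in>{1..n+1}. a (n+1+i) (n+1+j) = 0"
      and T3: "\<forall>i\<in>{1..n+1}. \<forall>j\<in>{1..n+1}. a (n+1+j) i = - a i (n+1+j)"
      and B6: "\<forall>i\<in>{1..n}. \<forall>j\<in>{1..n}. a i (n+1+j) = a j (n+1+i)"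
      by blast+
    show "\<forall>X Y Z. hvec n X \<longrightarrow> hvec n Y \<longrightarrow> hvec n Z \<longrightarrow> d2 n (kahler_form n a) X Y Z = 0"
      using bwd[OF AS LR T3 B6] by blast
  qed
qed

end
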